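(* Let $\mathbf p$ be a pinned configuration in $\mathbb R^d$ with $\ell$-dimensional affine span, and let $k\ge1$. If an analytic trajectory $\mathbf p(t)$ with $\mathbf p(0)=\mathbf p$ is in $\ell$-pinned position for all $t$ and is $k$-trivial, then it is $k$-vanishing.
   Context: A configuration $\mathbf q=(\mathbf q_1,\dots,\mathbf q_n)$, $\mathbf q_i\in\mathbb R^d$, is in $\ell$-pinned position if $\mathbf q_1=0$ and, for $2\le i\le\ell+1$, $\mathbf q_i\in\mathrm{span}(e_1,\dots,e_{i-1})$. A configuration $\mathbf p$ with $\ell$-dimensional affine span is pinned if $\mathbf p_1,\dots,\mathbf p_{\ell+1}$ are affinely independent and $\mathbf p$ is in $\ell$-pinned position. An analytic trajectory of isometries is a family $T(t)\mathbf x=A(t)\mathbf x+\mathbf b(t)$ with $A(t)$ orthogonal and $A,\mathbf b$ analytic in $t$. An analytic trajectory $\mathbf p(t)$ is $k$-trivial if it agrees through $k$-th order in $t$ (equal Taylor coefficients of orders $0,\dots,k$ at $t=0$) with $T(t)\mathbf p(0)$ for some analytic trajectory of isometries $T(t)$ with $T(0)=I$. A $C^k$ vector function $\varphi(t)$ is $k$-vanishing if $\varphi^{(i)}(0)=0$ for $1\le i\le k$. *)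

theory Defs
  imports "HOL-Analysis.Analysis"
begin

text \<open>Points of a configuration are indexed by 1..n. Euclidean space R^d is
  the type real^'d; the ordered standard basis e_1,...,e_d is given by a bijection
  idx : {1..CARD('d)} -> 'd, e_m = axis (idx m) 1.\<close>

definition std_basis :: "(nat \<Rightarrow> 'd::finite) \<Rightarrow> nat \<Rightarrow> real ^ 'd" where
  "std_basis idx m = axis (idx m) 1"

definition analytic_on_radius :: "real \<Rightarrow> (real \<Rightarrow> real) \<Rightarrow> bool" where
  "analytic_on_radius r f \<longleftrightarrow> (\<exists>c::nat \<Rightarrow> real. \<forall>t. \<bar>t\<bar> < r \<longrightarrow> (\<lambda>m. c m * t ^ m) sums f t)"

definition pinned_position ::
  "(nat \<Rightarrow> 'd::finite) \<Rightarrow> nat \<Rightarrow> (nat \<Rightarrow> real ^ 'd) \<Rightarrow> bool" where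
  "pinned_position idx l q \<longleftrightarrow>
     q 1 = 0 \<and> (\<forall>i\<in>{2..l+1}. q i \<in> span (std_basis idx ` {1..i-1}))"

definition pinned_config ::
  "(nat \<Rightarrow> 'd::finite) \<Rightarrow> nat \<Rightarrow> nat \<Rightarrow> (nat \<Rightarrow> real ^ 'd) \<Rightarrow> bool" where
  "pinned_config idx n l p \<longleftrightarrow>
     l + 1 \<le> n \<and> aff_dim (p ` {1..n}) = int l \<and>
     inj_on p {1..l+1} \<and> \<not> affine_dependent (p ` {1..l+1}) \<and>
     pinned_position idx l p"

definition analytic_traj ::
  "real \<Rightarrow> nat \<Rightarrow> (real \<Rightarrow> nat \<Rightarrow> real ^ 'd::finite) \<Rightarrow> bool" where
  "analytic_traj r n P \<longleftrightarrow> r > 0 \<and>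
     (\<forall>i\<in>{1..n}. \<forall>j. analytic_on_radius r (\<lambda>t. P t i $ j))"

definition analytic_isom_traj ::
  "real \<Rightarrow> (real \<Rightarrow> real ^ 'd ^ 'd::finite) \<Rightarrow> (real \<Rightarrow> real ^ 'd) \<Rightarrow> bool" where
  "analytic_isom_traj r A b \<longleftrightarrow> r > 0 \<and>
     (\<forall>i j. analytic_on_radius r (\<lambda>t. A t $ i $ j)) \<and>
     (\<forall>j. analytic_on_radius r (\<lambda>t. b t $ j)) \<and>
     (\<forall>t. \<bar>t\<bar> < r \<longrightarrow> orthogonal_matrix (A t))"

definition taylor_coeff :: "nat \<Rightarrow> (real \<Rightarrow> real) \<Rightarrow> real" where
  "taylor_coeff i f = (deriv ^^ i) f 0 / fact i"

definition k_trivial ::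
  "nat \<Rightarrow> nat \<Rightarrow> (real \<Rightarrow> nat \<Rightarrow> real ^ 'd::finite) \<Rightarrow> bool" where
  "k_trivial k n P \<longleftrightarrow>
     (\<exists>r A b. analytic_isom_traj r A b \<and> A 0 = mat 1 \<and> b 0 = 0 \<and>
        (\<forall>i\<le>k. \<forall>m\<in>{1..n}. \<forall>j.
            taylor_coeff i (\<lambda>t. P t m $ j) = taylor_coeff i (\<lambda>t. (A t *v P 0 m + b t) $ j)))"

definition k_vanishing ::
  "nat \<Rightarrow> nat \<Rightarrow> (real \<Rightarrow> nat \<Rightarrow> real ^ 'd::finite) \<Rightarrow> bool" where
  "k_vanishing k n P \<longleftrightarrow>
     (\<forall>i\<in>{1..k}. \<forall>m\<in>{1..n}. \<forall>j. (deriv ^^ i) (\<lambda>t. P t m $ j) 0 = 0)"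

end

theory Submission imports Defs "HOL-Analysis.Analysis" begin
definition ps :: "real \<Rightarrow> (nat \<Rightarrow> real) \<Rightarrow> (real \<Rightarrow> real) \<Rightarrow> bool" where
  "ps r c f \<longleftrightarrow> (\<forall>t. \<bar>t\<bar> < r \<longrightarrow> (\<lambda>m. c m * t ^ m) sums f t)"

lemma ps_deriv:
  assumes "ps r c f"
  shows "ps r (diffs c) (deriv f)"
  unfolding ps_def
proof (intro allI impI)
  fix t :: real assume t: "\<bar>t\<bar> < r"
  have sm: "\<And>z. norm z < r \<Longrightarrow> summable (\<lambda>n. c n * z ^ n)"
    using assms unfolding ps_def by (auto intro: sums_summable)
  have d: "((\<lambda>z. \<Sum>n. c n * z^n) has_field_derivative (\<Sum>n. diffs c n * t^n)) (at t)"
    by (rule termdiffs_strong') (use sm t in auto)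
  have "(f has_field_derivative (\<Sum>n. diffs c n * t^n)) (at t)"
  proof (rule has_field_derivative_transform_within_open[OF d, of "{-r<..<r}"])
    show "t \<in> {-r<..<r}" using t by auto
    fix x assume "x \<in> {-r<..<r}"
    then have "\<bar>x\<bar> < r" by auto
    then show "(\<Sum>n. c n * x ^ n) = f x" using assms unfolding ps_def by (simp add: sums_iff)
  qed auto
  then have "deriv f t = (\<Sum>n. diffs c n * t^n)" by (rule DERIV_imp_deriv)
  moreover have "summable (\<lambda>n. diffs c n * t^n)"
    by (rule termdiff_converges[of t r]) (use sm t in auto)
  ultimately show "(\<lambda>m. diffs c m * t ^ m) sums deriv f t" by (simp add: summable_sums)
qed

lemma ps_coeff:
  assumes "ps r c f" "r > 0"
  shows "(deriv ^^ i) f 0 = fact i * c i"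
  using assms
proof (induction i arbitrary: c f)
  case 0
  then have "c 0 = f 0" unfolding ps_def by (metis abs_0 powser_sums_zero_iff)
  then show ?case by simp
next
  case (Suc i)
  have "(deriv ^^ Suc i) f 0 = (deriv ^^ i) (deriv f) 0" by (simp add: funpow_Suc_right del: funpow.simps)
  also have "\<dots> = fact i * diffs c i" using Suc.IH[OF ps_deriv[OF Suc.prems(1)] Suc.prems(2)] .
  also have "\<dots> = fact (Suc i) * c (Suc i)" by (simp add: diffs_def)
  finally show ?case .
qed

lemma ps_unique:
  assumes "ps r c f" "ps r' d f" "r > 0" "r' > 0"
  shows "c = d"
proof
  fix i
  have "fact i * c i = fact i * d i" using ps_coeff[OF assms(1,3)] ps_coeff[OF assms(2,4)] by simp
  then show "c i = d i" by simp
qed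

lemma ps_cong:
  assumes "ps r c f" "\<And>t. \<bar>t\<bar> < r \<Longrightarrow> f t = g t"
  shows "ps r c g"
  using assms unfolding ps_def by auto

lemma ps_const: "ps r (\<lambda>m. if m = 0 then a else 0) (\<lambda>t. a)"
  unfolding ps_def
proof (intro allI impI)
  fix t :: real
  have "(\<lambda>m. (if m = 0 then a else 0) * t ^ m) = (\<lambda>m. if m = 0 then a else 0)" by auto
  moreover have "(\<lambda>m::nat. if m = 0 then a else 0) sums a"
    using sums_single[of 0 "\<lambda>_. a"] by simp
  ultimately show "(\<lambda>m. (if m = 0 then a else 0) * t ^ m) sums a" by simp
qed

lemma ps_add: "ps r c f \<Longrightarrow> ps r d g \<Longrightarrow> ps r (\<lambda>m. c m + d m) (\<lambda>t. f t + g t)"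
  unfolding ps_def by (auto simp: distrib_right intro: sums_add)

lemma ps_cmult: "ps r c f \<Longrightarrow> ps r (\<lambda>m. a * c m) (\<lambda>t. a * f t)"
  unfolding ps_def by (auto simp: mult.assoc intro: sums_mult)

lemma ps_sum: "finite S \<Longrightarrow> (\<And>x. x \<in> S \<Longrightarrow> ps r (c x) (f x)) \<Longrightarrow>
   ps r (\<lambda>m. \<Sum>x\<in>S. c x m) (\<lambda>t. \<Sum>x\<in>S. f x t)"
  unfolding ps_def by (auto simp: sum_distrib_right intro!: sums_sum)

lemma ps_mult:
  assumes "ps r a f" "ps r b g"
  shows "ps r (\<lambda>k. \<Sum>i\<le>k. a i * b (k - i)) (\<lambda>t. f t * g t)"
  unfolding ps_def
proof (intro allI impI)
  fix t :: real assume t: "\<bar>t\<bar> < r"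
  define K where "K = (\<bar>t\<bar> + r) / 2"
  have K: "\<bar>t\<bar> < K" "\<bar>K\<bar> < r" using t by (auto simp: K_def)
  have sa: "summable (\<lambda>n. norm (a n * t ^ n))"
    by (rule powser_insidea[of _ K]) (use assms(1) K in \<open>unfold ps_def, meson sums_summable, simp\<close>)
  have sb: "summable (\<lambda>n. norm (b n * t ^ n))"
    by (rule powser_insidea[of _ K]) (use assms(2) K in \<open>unfold ps_def, meson sums_summable, simp\<close>)
  have "(\<lambda>k. \<Sum>i\<le>k. (a i * t ^ i) * (b (k - i) * t ^ (k - i))) sums
        ((\<Sum>k. a k * t ^ k) * (\<Sum>k. b k * t ^ k))"
    by (rule Cauchy_product_sums[OF sa sb])
  moreover have "(\<Sum>k. a k * t ^ k) = f t" "(\<Sum>k. b k * t ^ k) = g t"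
    using assms t by (auto simp: ps_def sums_iff)
  moreover have "(\<Sum>i\<le>k. (a i * t ^ i) * (b (k - i) * t ^ (k - i))) = (\<Sum>i\<le>k. a i * b (k - i)) * t ^ k" for k
    unfolding sum_distrib_right
  proof (rule sum.cong)
    fix i assume "i \<in> {..k}"
    then have "t ^ i * t ^ (k - i) = t ^ k" by (simp flip: power_add)
    then show "a i * t ^ i * (b (k - i) * t ^ (k - i)) = a i * b (k - i) * t ^ k"
      by (metis (no_types, lifting) mult.assoc mult.left_commute)
  qed simp
  ultimately show "(\<lambda>k. (\<Sum>i\<le>k. a i * b (k - i)) * t ^ k) sums (f t * g t)" by simp
qed

lemma sub_pre: "subspace S \<Longrightarrow> subspace {x. (M::real^'n^'m) *v x \<in> S}"
  using linear_add[OF matrix_vector_mul_linear[of M]] linear_cmul[OF matrix_vector_mul_linear[of M]]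
    linear_0[OF matrix_vector_mul_linear[of M]]
  by (auto simp: subspace_def)

lemma sub_ker: "subspace {x. (M::real^'n^'m) *v x = 0}"
  using sub_pre[OF subspace_single_0, of M] by simp

lemma ps_taylor: "ps r c f \<Longrightarrow> r > 0 \<Longrightarrow> taylor_coeff i f = c i"
  unfolding taylor_coeff_def using ps_coeff[of r c f i] by simp

lemma ps_zero_fun: "ps r c f \<Longrightarrow> r > 0 \<Longrightarrow> (\<And>t. \<bar>t\<bar> < r \<Longrightarrow> f t = 0) \<Longrightarrow> c i = 0"
proof -
  assume a: "ps r c f" "r > 0" "\<And>t. \<bar>t\<bar> < r \<Longrightarrow> f t = 0"
  have "ps r (\<lambda>m. if m = 0 then 0 else 0) f"
    using ps_cong[OF ps_const[of r 0], of f] a(3) by auto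
  from ps_unique[OF a(1) this a(2) a(2)] show "c i = 0" by simp
qed

lemma ps_matvec:
  fixes Am :: "real \<Rightarrow> real^'d^'d"
  assumes "\<And>a c. ps r (cA a c) (\<lambda>t. Am t $ a $ c)"
  shows "ps r (\<lambda>u. ((\<chi> a c. cA a c u) *v w) $ a) (\<lambda>t. (Am t *v w) $ a)"
proof -
  have "ps r (\<lambda>u. \<Sum>c\<in>UNIV. w $ c * cA a c u) (\<lambda>t. \<Sum>c\<in>UNIV. w $ c * (Am t $ a $ c))"
    by (intro ps_sum ps_cmult assms) auto
  then show ?thesis by (simp add: matrix_vector_mult_def mult.commute)
qed

lemma orth_inner: "orthogonal_matrix (A::real^'n^'n) \<Longrightarrow> (A *v w) \<bullet> (A *v v) = w \<bullet> v"
  by (metis dot_matrix_product dot_matrix_vector_mul matrix_mul_lid orthogonal_matrix_def)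

lemma orth_coeff:
  fixes Am :: "real \<Rightarrow> real^'d^'d"
  assumes ps: "\<And>a c. ps r (cA a c) (\<lambda>t. Am t $ a $ c)" and r: "r > 0"
    and orth: "\<And>t. \<bar>t\<bar> < r \<Longrightarrow> orthogonal_matrix (Am t)"
    and j: "j \<noteq> 0"
  shows "(\<Sum>u\<le>j. ((\<chi> a c. cA a c u) *v w) \<bullet> ((\<chi> a c. cA a c (j - u)) *v v)) = 0"
proof -
  define M where "M u = (\<chi> a c. cA a c u)" for u
  have "ps r (\<lambda>k. \<Sum>a\<in>UNIV. \<Sum>u\<le>k. (M u *v w) $ a * (M (k - u) *v v) $ a)
           (\<lambda>t. \<Sum>a\<in>UNIV. (Am t *v w) $ a * (Am t *v v) $ a)"
    unfolding M_def by (intro ps_sum ps_mult ps_matvec ps) auto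
  then have h1: "ps r (\<lambda>k. \<Sum>a\<in>UNIV. \<Sum>u\<le>k. (M u *v w) $ a * (M (k - u) *v v) $ a) (\<lambda>t. w \<bullet> v)"
  proof (rule ps_cong)
    fix t :: real assume "\<bar>t\<bar> < r"
    then have "(Am t *v w) \<bullet> (Am t *v v) = w \<bullet> v" using orth orth_inner by blast
    then show "(\<Sum>a\<in>UNIV. (Am t *v w) $ a * (Am t *v v) $ a) = w \<bullet> v" by (simp add: inner_vec_def)
  qed
  have "(\<lambda>k. \<Sum>a\<in>UNIV. \<Sum>u\<le>k. (M u *v w) $ a * (M (k - u) *v v) $ a) = (\<lambda>m. if m = 0 then w \<bullet> v else 0)"
    by (rule ps_unique[OF h1 ps_const r r])
  then have "(\<Sum>a\<in>UNIV. \<Sum>u\<le>j. (M u *v w) $ a * (M (j - u) *v v) $ a) = 0"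
    using j by (metis (no_types, lifting))
  moreover have "(\<Sum>u\<le>j. (M u *v w) \<bullet> (M (j - u) *v v)) = (\<Sum>a\<in>UNIV. \<Sum>u\<le>j. (M u *v w) $ a * (M (j - u) *v v) $ a)"
    unfolding inner_vec_def inner_real_def by (rule sum.swap)
  ultimately show ?thesis unfolding M_def by simp
qed

theorem lemmaA9:
  fixes idx :: "nat \<Rightarrow> 'd::finite" and n l k :: nat and r :: real
    and P :: "real \<Rightarrow> nat \<Rightarrow> real ^ 'd"
  assumes "bij_betw idx {1..CARD('d)} (UNIV :: 'd set)"
    and "pinned_config idx n l (P 0)"
    and "k \<ge> 1"
    and "analytic_traj r n P"
    and "\<forall>t. \<bar>t\<bar> < r \<longrightarrow> pinned_position idx l (P t)"
    and "k_trivial k n P"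
  shows "k_vanishing k n P"
proof -
  define d where "d = CARD('d)"
  define p where "p = P 0"
  have bij: "bij_betw idx {1..d} (UNIV :: 'd set)" using assms(1) d_def by simp
  have injidx: "inj_on idx {1..d}" using bij bij_betw_imp_inj_on by blast
  have surjidx: "\<And>c. \<exists>b\<in>{1..d}. c = idx b" using bij by (metis bij_betw_iff_bijections UNIV_I)
  have ln: "l + 1 \<le> n" and affd: "aff_dim (p ` {1..n}) = int l" and injp: "inj_on p {1..l+1}"
    and nad: "\<not> affine_dependent (p ` {1..l+1})" and pp1: "p 1 = 0"
    and pps: "\<And>i. i \<in> {2..l+1} \<Longrightarrow> p i \<in> span (std_basis idx ` {1..i-1})"
    using assms(2) unfolding pinned_config_def pinned_position_def p_def by auto
  have r0: "r > 0" and anP: "\<forall>i\<in>{1..n}. \<forall>j. analytic_on_radius r (\<lambda>t. P t i $ j)"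
    using assms(4) unfolding analytic_traj_def by auto
  have "\<forall>x. \<exists>c. fst x \<in> {1..n} \<longrightarrow> ps r c (\<lambda>t. P t (fst x) $ snd x)"
    using anP unfolding analytic_on_radius_def ps_def by auto
  then obtain FP where FP: "\<And>x. fst x \<in> {1..n} \<Longrightarrow> ps r (FP x) (\<lambda>t. P t (fst x) $ snd x)"
    by metis
  define cP where "cP m j = FP (m, j)" for m j
  have cP: "\<And>m j. m \<in> {1..n} \<Longrightarrow> ps r (cP m j) (\<lambda>t. P t m $ j)"
    using FP unfolding cP_def by (metis fst_conv snd_conv)
  obtain rA Am bv where isom: "analytic_isom_traj rA Am bv" and A0: "Am 0 = mat 1" and b0: "bv 0 = 0"
    and tc: "\<And>i m j. i \<le> k \<Longrightarrow> m \<in> {1..n} \<Longrightarrow>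
        taylor_coeff i (\<lambda>t. P t m $ j) = taylor_coeff i (\<lambda>t. (Am t *v P 0 m + bv t) $ j)"
    using assms(6) unfolding k_trivial_def by blast
  have rA: "rA > 0" and orth: "\<And>t. \<bar>t\<bar> < rA \<Longrightarrow> orthogonal_matrix (Am t)"
    using isom unfolding analytic_isom_traj_def by auto
  have "\<forall>x. \<exists>c. ps rA c (\<lambda>t. Am t $ fst x $ snd x)"
    using isom unfolding analytic_isom_traj_def analytic_on_radius_def ps_def by auto
  then obtain FA where FA: "\<And>x. ps rA (FA x) (\<lambda>t. Am t $ fst x $ snd x)" by metis
  define cA where "cA a c = FA (a, c)" for a c
  have cA: "\<And>a c. ps rA (cA a c) (\<lambda>t. Am t $ a $ c)"
    using FA unfolding cA_def by (metis fst_conv snd_conv)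
  have "\<forall>j. \<exists>c. ps rA c (\<lambda>t. bv t $ j)"
    using isom unfolding analytic_isom_traj_def analytic_on_radius_def ps_def by auto
  then obtain cb where cb: "\<And>j. ps rA (cb j) (\<lambda>t. bv t $ j)" by metis
  define M where "M u = (\<chi> a c. cA a c u)" for u
  have psM: "\<And>w a. ps rA (\<lambda>u. (M u *v w) $ a) (\<lambda>t. (Am t *v w) $ a)"
    unfolding M_def by (rule ps_matvec[OF cA])
  have M0: "M 0 = mat 1"
  proof -
    have "cA a c 0 = Am 0 $ a $ c" for a c using ps_coeff[OF cA[of a c] rA, where i=0] by simp
    then show ?thesis unfolding M_def A0 by (simp add: vec_eq_iff)
  qed
  have O: "\<And>j v w. j \<noteq> 0 \<Longrightarrow> (\<Sum>u\<le>j. (M u *v w) \<bullet> (M (j - u) *v v)) = 0"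
    unfolding M_def by (rule orth_coeff[OF cA rA orth])
  have T: "\<And>i m j. i \<le> k \<Longrightarrow> m \<in> {1..n} \<Longrightarrow> cP m j i = (M i *v p m) $ j + cb j i"
  proof -
    fix i m j assume i: "i \<le> k" and m: "m \<in> {1..n}"
    have h: "ps rA (\<lambda>u. (M u *v p m) $ j + cb j u) (\<lambda>t. (Am t *v P 0 m + bv t) $ j)"
      using ps_add[OF psM[of "p m" j] cb[of j]] unfolding p_def by simp
    have h1: "taylor_coeff i (\<lambda>t. P t m $ j) = cP m j i" by (rule ps_taylor[OF cP[OF m] r0])
    have h2: "taylor_coeff i (\<lambda>t. (Am t *v P 0 m + bv t) $ j) = (M i *v p m) $ j + cb j i"
      by (rule ps_taylor[OF h rA])
    show "cP m j i = (M i *v p m) $ j + cb j i"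
      using tc[OF i m, of j] h1 h2 by simp
  qed
  have n1: "1 \<in> {1..n}" using ln by auto
  have cP1: "\<And>j i. cP 1 j i = 0"
    using ps_zero_fun[OF cP[OF n1] r0] assms(5) unfolding pinned_position_def by auto
  have cb0: "\<And>j i. i \<le> k \<Longrightarrow> cb j i = 0"
    using T[OF _ n1] cP1 pp1 by simp
  define V where "V a = {x::real^'d. \<forall>b\<in>{1..d}. a < b \<longrightarrow> x $ idx b = 0}" for a
  have subV: "\<And>a. subspace (V a)" unfolding V_def subspace_def by auto
  have Vmono: "\<And>a a'. a \<le> a' \<Longrightarrow> V a \<subseteq> V a'" unfolding V_def by auto
  define Q where "Q = p ` {2..l+1}"
  have img: "p ` {1..l+1} = insert (p 1) Q"
  proof -
    have "{1..l+1} = insert 1 {2..l+1}" by auto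
    then show ?thesis unfolding Q_def by simp
  qed
  have p1Q: "p 1 \<notin> Q"
  proof
    assume "p 1 \<in> Q"
    then obtain i where i: "i \<in> {2..l+1}" "p 1 = p i" unfolding Q_def by auto
    then have "1 = i" using inj_onD[OF injp i(2)] by auto
    then show False using i by auto
  qed
  have indQ: "independent Q"
    using nad affine_dependent_iff_dependent[OF p1Q] img pp1 by simp
  have cardQ: "card Q = l" unfolding Q_def using card_image[OF inj_on_subset[OF injp, of "{2..l+1}"]] by simp
  have ld: "l \<le> d" using independent_bound[OF indQ] cardQ d_def by simp
  have spanV: "\<And>a. a \<le> d \<Longrightarrow> span (std_basis idx ` {1..a}) \<subseteq> V a"
  proof -
    fix a assume a: "a \<le> d"
    have "std_basis idx m \<in> V a" if m: "m \<in> {1..a}" for m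
      unfolding V_def std_basis_def
    proof (intro CollectI ballI impI)
      fix b assume b: "b \<in> {1..d}" "a < b"
      have md: "m \<in> {1..d}" using m a by auto
      have "b \<noteq> m" using b m by auto
      then have "idx b \<noteq> idx m" using inj_onD[OF injidx _ b(1) md] by blast
      then show "axis (idx m) 1 $ idx b = 0" by (simp add: axis_def)
    qed
    then show "span (std_basis idx ` {1..a}) \<subseteq> V a" by (intro span_minimal subV) auto
  qed
  have Z2: "\<And>i b s. i \<in> {2..l+1} \<Longrightarrow> b \<in> {1..d} \<Longrightarrow> i - 1 < b \<Longrightarrow> cP i (idx b) s = 0"
  proof -
    fix i b s assume i: "i \<in> {2..l+1}" and b: "b \<in> {1..d}" "i - 1 < b"
    have im: "i \<in> {1..n}" using i ln by auto
    show "cP i (idx b) s = 0"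
    proof (rule ps_zero_fun[OF cP[OF im] r0])
      fix t :: real assume "\<bar>t\<bar> < r"
      then have "P t i \<in> span (std_basis idx ` {1..i-1})" using assms(5) i unfolding pinned_position_def by auto
      also have "\<dots> \<subseteq> V (i-1)" using i ld by (intro spanV) auto
      finally show "P t i $ idx b = 0" using b unfolding V_def by auto
    qed
  qed
  have KD: "\<And>a. a \<in> {1..l} \<Longrightarrow> std_basis idx a \<in> span (p ` {2..a+1})"
  proof -
    fix a assume a: "a \<in> {1..l}"
    let ?B = "p ` {2..a+1}" let ?E = "span (std_basis idx ` {1..a})"
    have BE: "?B \<subseteq> ?E"
    proof
      fix x assume "x \<in> ?B" then obtain i where i: "i \<in> {2..a+1}" "x = p i" by auto
      have "x \<in> span (std_basis idx ` {1..i-1})" using pps[of i] i a by auto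
      also have "\<dots> \<subseteq> ?E" using i by (intro span_mono image_mono) auto
      finally show "x \<in> ?E" .
    qed
    have indB: "independent ?B" using indQ unfolding Q_def by (rule independent_mono) (use a in auto)
    have cardB: "card ?B = a" using card_image[OF inj_on_subset[OF injp, of "{2..a+1}"]] a by simp
    have "dim ?E \<le> a"
    proof -
      have "dim ?E = dim (std_basis idx ` {1..a})" by (rule dim_span)
      also have "\<dots> \<le> card (std_basis idx ` {1..a})" by (rule dim_le_card[OF span_superset]) simp
      also have "\<dots> \<le> a" using card_image_le[of "{1..a}" "std_basis idx"] by simp
      finally show ?thesis .
    qed
    then have "?E \<subseteq> span ?B" using card_ge_dim_independent[OF BE indB] cardB by simp
    moreover have "std_basis idx a \<in> ?E" using a by (intro span_base) auto
    ultimately show "std_basis idx a \<in> span ?B" by auto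
  qed
  define W where "W = span (std_basis idx ` {1..l})"
  have eW: "\<And>a. a \<in> {1..l} \<Longrightarrow> std_basis idx a \<in> W" unfolding W_def by (intro span_base) auto
  have KILL: "\<And>j. 1 \<le> j \<Longrightarrow> j \<le> k \<Longrightarrow> \<forall>w\<in>W. M j *v w = 0"
  proof -
    fix j0 :: nat
    show "1 \<le> j0 \<Longrightarrow> j0 \<le> k \<Longrightarrow> \<forall>w\<in>W. M j0 *v w = 0"
    proof (induction j0 rule: less_induct)
      case (less j)
      have j0: "j \<noteq> 0" using less.prems by simp
      have F2: "w \<bullet> (M j *v v) + (M j *v w) \<bullet> v = 0" if v: "v \<in> W" and w: "w \<in> W" for v w
      proof -
        define f where "f u = (M u *v w) \<bullet> (M (j - u) *v v)" for u
        have "(\<Sum>u\<le>j. f u) = 0" unfolding f_def by (rule O[OF j0])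
        moreover have "(\<Sum>u\<le>j. f u) = (\<Sum>u\<in>{0,j}. f u)"
        proof (rule sum.mono_neutral_right)
          show "\<forall>u\<in>{..j} - {0, j}. f u = 0"
          proof
            fix u assume u: "u \<in> {..j} - {0, j}"
            then have "M u *v w = 0" using less.IH[of u] less.prems w by auto
            then show "f u = 0" unfolding f_def by simp
          qed
        qed auto
        moreover have "(\<Sum>u\<in>{0,j}. f u) = f 0 + f j" using j0 by simp
        ultimately show ?thesis unfolding f_def using M0 by simp
      qed
      have MP: "M j *v p i \<in> V (i - 1)" if i: "i \<in> {2..l+1}" for i
        unfolding V_def
      proof (intro CollectI ballI impI)
        fix b assume b: "b \<in> {1..d}" "i - 1 < b"
        have im: "i \<in> {1..n}" using i ln by auto
        have "cP i (idx b) j = (M j *v p i) $ idx b + cb (idx b) j" using T[OF _ im] less.prems by simp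
        then show "(M j *v p i) $ idx b = 0" using Z2[OF i b] cb0[of j] less.prems by simp
      qed
      have F1: "M j *v std_basis idx a \<in> V a" if a: "a \<in> {1..l}" for a
      proof -
        have "p ` {2..a+1} \<subseteq> {x. M j *v x \<in> V a}"
        proof
          fix x assume "x \<in> p ` {2..a+1}" then obtain i where i: "i \<in> {2..a+1}" "x = p i" by auto
          have "M j *v p i \<in> V (i - 1)" using MP[of i] i a by auto
          also have "\<dots> \<subseteq> V a" using i by (intro Vmono) auto
          finally show "x \<in> {x. M j *v x \<in> V a}" using i by simp
        qed
        then have "span (p ` {2..a+1}) \<subseteq> {x. M j *v x \<in> V a}" by (intro span_minimal sub_pre subV)
        then show ?thesis using KD[OF a] by auto
      qed
      have ZE: "M j *v std_basis idx a = 0" if a: "a \<in> {1..l}" for a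
      proof (subst vec_eq_iff, intro allI)
        fix c
        obtain b where b: "b \<in> {1..d}" "c = idx b" using surjidx by blast
        show "(M j *v std_basis idx a) $ c = 0 $ c"
        proof (cases "a < b")
          case True
          then show ?thesis using F1[OF a] b unfolding V_def by auto
        next
          case False
          then have bl: "b \<in> {1..l}" using a b by auto
          have coord: "(M j *v std_basis idx a') $ idx b' = std_basis idx b' \<bullet> (M j *v std_basis idx a')" for a' b'
            by (simp add: std_basis_def inner_axis')
          show ?thesis
          proof (cases "b = a")
            case True
            have "std_basis idx a \<bullet> (M j *v std_basis idx a) + (M j *v std_basis idx a) \<bullet> std_basis idx a = 0"
              using F2[OF eW[OF a] eW[OF a]] .
            then show ?thesis using b True coord[of a a] by (simp add: inner_commute)
          next
            case False
            then have ba: "b < a" using \<open>\<not> a < b\<close> by simp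
            have "std_basis idx b \<bullet> (M j *v std_basis idx a) + (M j *v std_basis idx b) \<bullet> std_basis idx a = 0"
              using F2[OF eW[OF a] eW[OF bl]] .
            moreover have "(M j *v std_basis idx b) \<bullet> std_basis idx a = (M j *v std_basis idx b) $ idx a"
              by (simp add: std_basis_def inner_axis)
            moreover have "(M j *v std_basis idx b) $ idx a = 0"
              using F1[OF bl] ba a ld unfolding V_def by auto
            ultimately show ?thesis using b coord[of a b] by simp
          qed
        qed
      qed
      have "W \<subseteq> {x. M j *v x = 0}" unfolding W_def using ZE by (intro span_minimal sub_ker) auto
      then show ?case by auto
    qed
  qed
  have PW: "\<And>m. m \<in> {1..n} \<Longrightarrow> p m \<in> W"
  proof -
    fix m assume m: "m \<in> {1..n}"
    have sub: "{1..l+1} \<subseteq> {1..n}" using ln by auto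
    have cardI: "card (p ` {1..l+1}) = l + 1" using card_image[OF injp] by simp
    have ad1: "aff_dim (p ` {1..l+1}) = int l" using aff_dim_affine_independent[OF nad] cardI by simp
    have "affine hull (p ` {1..l+1}) = affine hull (p ` {1..n})"
    proof (rule affine_dim_equal)
      show "affine hull p ` {1..l + 1} \<subseteq> affine hull p ` {1..n}" using sub by (intro hull_mono image_mono)
    qed (use ad1 affd in \<open>auto simp: aff_dim_affine_hull\<close>)
    moreover have "p m \<in> affine hull (p ` {1..n})" using m by (intro hull_inc) auto
    moreover have "affine hull (p ` {1..l+1}) = span (p ` {1..l+1})"
    proof (rule affine_hull_span_0)
      have "p 1 \<in> p ` {1..l+1}" by auto
      then show "0 \<in> affine hull (p ` {1..l+1})" using pp1 hull_inc by metis
    qed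
    moreover have "span (p ` {1..l+1}) \<subseteq> W"
    proof (rule span_minimal)
      show "subspace W" unfolding W_def by (rule subspace_span)
      show "p ` {1..l+1} \<subseteq> W"
      proof
        fix x assume "x \<in> p ` {1..l+1}" then obtain i where i: "i \<in> {1..l+1}" "x = p i" by auto
        show "x \<in> W"
        proof (cases "i = 1")
          case True then show ?thesis using i pp1 unfolding W_def by (simp add: span_zero)
        next
          case False
          then have i2: "i \<in> {2..l+1}" using i by auto
          then have "p i \<in> span (std_basis idx ` {1..i-1})" by (rule pps)
          also have "\<dots> \<subseteq> W" unfolding W_def using i2 by (intro span_mono image_mono) auto
          finally show ?thesis using i by simp
        qed
      qed
    qed
    ultimately show "p m \<in> W" by auto
  qed
  show ?thesis unfolding k_vanishing_def
  proof (intro ballI allI)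
    fix i m j assume i: "i \<in> {1..k}" and m: "m \<in> {1..n}"
    have "cP m j i = (M i *v p m) $ j + cb j i" using T[OF _ m] i by auto
    also have "\<dots> = 0" using KILL[of i] i PW[OF m] cb0[of i j] by auto
    finally show "(deriv ^^ i) (\<lambda>t. P t m $ j) 0 = 0" using ps_coeff[OF cP[OF m] r0, where i=i] by simp
  qed
qed

end
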